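(* Let $\mathcal{H}$ be a right quaternionic Hilbert space and $x_1,\dots,x_n,y_1,\dots,y_n\in\mathcal{H}$ unit vectors. Let $g(z)=\sum_{i=0}^\infty a_iz^{2i}$ be analytic in the open complex unit disk with $a_i\in\mathbb{R}$ and $\sum_{i=0}^\infty|a_i|=1$. Then there exist unit vectors $u_1,\dots,u_n,v_1,\dots,v_n$ in a right quaternionic Hilbert space $\mathcal{H}'$ such that $\langle x_i,y_j\rangle\,g(|\langle x_i,y_j\rangle|)=\langle u_i,v_j\rangle$ for all $i,j=1,\dots,n$.
   Context: A right quaternionic Hilbert space is a right $\mathbb{H}$-vector space with inner product satisfying $\langle y,x\rangle=\overline{\langle x,y\rangle}$, $\langle xa+yb,z\rangle=\bar a\langle x,z\rangle+\bar b\langle y,z\rangle$, $\langle z,xa+yb\rangle=\langle z,x\rangle a+\langle z,y\rangle b$, $\langle x,x\rangle>0$ for $x\ne0$. *)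

theory Defs
  imports "HOL-Analysis.Analysis"
begin

datatype quat = Quat (qRe: real) (qI: real) (qJ: real) (qK: real)

definition qzero :: quat where "qzero = Quat 0 0 0 0"
definition qone :: quat where "qone = Quat 1 0 0 0"
definition qof_real :: "real \<Rightarrow> quat" where "qof_real r = Quat r 0 0 0"

definition qadd :: "quat \<Rightarrow> quat \<Rightarrow> quat" where
  "qadd p q = Quat (qRe p + qRe q) (qI p + qI q) (qJ p + qJ q) (qK p + qK q)"

definition qmul :: "quat \<Rightarrow> quat \<Rightarrow> quat" where
  "qmul p q = Quat
     (qRe p * qRe q - qI p * qI q - qJ p * qJ q - qK p * qK q)
     (qRe p * qI q + qI p * qRe q + qJ p * qK q - qK p * qJ q)
     (qRe p * qJ q - qI p * qK q + qJ p * qRe q + qK p * qI q)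
     (qRe p * qK q + qI p * qJ q - qJ p * qI q + qK p * qRe q)"

definition qcnj :: "quat \<Rightarrow> quat" where
  "qcnj q = Quat (qRe q) (- qI q) (- qJ q) (- qK q)"

definition qabs :: "quat \<Rightarrow> real" where
  "qabs q = sqrt ((qRe q)\<^sup>2 + (qI q)\<^sup>2 + (qJ q)\<^sup>2 + (qK q)\<^sup>2)"

definition qpos :: "quat \<Rightarrow> bool" where
  "qpos q \<longleftrightarrow> qRe q > 0 \<and> qI q = 0 \<and> qJ q = 0 \<and> qK q = 0"

record 'v rqhs =
  vcarrier :: "'v set"
  vadd :: "'v \<Rightarrow> 'v \<Rightarrow> 'v"
  vzero :: "'v"
  vsmul :: "'v \<Rightarrow> quat \<Rightarrow> 'v"   \<comment> \<open>right scalar multiplication \<open>x a\<close>\<close>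
  vinner :: "'v \<Rightarrow> 'v \<Rightarrow> quat"

definition rqhs_norm :: "'v rqhs \<Rightarrow> 'v \<Rightarrow> real" where
  "rqhs_norm H x = sqrt (qRe (vinner H x x))"

definition rqhs_diff :: "'v rqhs \<Rightarrow> 'v \<Rightarrow> 'v \<Rightarrow> 'v" where
  "rqhs_diff H x y = vadd H x (vsmul H y (qof_real (-1)))"

definition right_quat_vector_space :: "'v rqhs \<Rightarrow> bool" where
  "right_quat_vector_space H \<longleftrightarrow>
     vzero H \<in> vcarrier H \<and>
     (\<forall>x\<in>vcarrier H. \<forall>y\<in>vcarrier H. vadd H x y \<in> vcarrier H) \<and>
     (\<forall>x\<in>vcarrier H. \<forall>a. vsmul H x a \<in> vcarrier H) \<and>
     (\<forall>x\<in>vcarrier H. \<forall>y\<in>vcarrier H. \<forall>z\<in>vcarrier H.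
         vadd H (vadd H x y) z = vadd H x (vadd H y z)) \<and>
     (\<forall>x\<in>vcarrier H. \<forall>y\<in>vcarrier H. vadd H x y = vadd H y x) \<and>
     (\<forall>x\<in>vcarrier H. vadd H x (vzero H) = x) \<and>
     (\<forall>x\<in>vcarrier H. \<exists>y\<in>vcarrier H. vadd H x y = vzero H) \<and>
     (\<forall>x\<in>vcarrier H. \<forall>a b. vsmul H x (qmul a b) = vsmul H (vsmul H x a) b) \<and>
     (\<forall>x\<in>vcarrier H. vsmul H x qone = x) \<and>
     (\<forall>x\<in>vcarrier H. \<forall>y\<in>vcarrier H. \<forall>a.
         vsmul H (vadd H x y) a = vadd H (vsmul H x a) (vsmul H y a)) \<and>
     (\<forall>x\<in>vcarrier H. \<forall>a b. vsmul H x (qadd a b) = vadd H (vsmul H x a) (vsmul H x b))"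

definition quat_inner_product :: "'v rqhs \<Rightarrow> bool" where
  "quat_inner_product H \<longleftrightarrow>
     (\<forall>x\<in>vcarrier H. \<forall>y\<in>vcarrier H. vinner H y x = qcnj (vinner H x y)) \<and>
     (\<forall>x\<in>vcarrier H. \<forall>y\<in>vcarrier H. \<forall>z\<in>vcarrier H. \<forall>a b.
        vinner H (vadd H (vsmul H x a) (vsmul H y b)) z
          = qadd (qmul (qcnj a) (vinner H x z)) (qmul (qcnj b) (vinner H y z))) \<and>
     (\<forall>x\<in>vcarrier H. \<forall>y\<in>vcarrier H. \<forall>z\<in>vcarrier H. \<forall>a b.
        vinner H z (vadd H (vsmul H x a) (vsmul H y b))
          = qadd (qmul (vinner H z x) a) (qmul (vinner H z y) b)) \<and>
     (\<forall>x\<in>vcarrier H. x \<noteq> vzero H \<longrightarrow> qpos (vinner H x x))"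

definition rqhs_complete :: "'v rqhs \<Rightarrow> bool" where
  "rqhs_complete H \<longleftrightarrow>
     (\<forall>s :: nat \<Rightarrow> 'v. (\<forall>k. s k \<in> vcarrier H) \<and>
          (\<forall>e>0. \<exists>N. \<forall>m\<ge>N. \<forall>k\<ge>N. rqhs_norm H (rqhs_diff H (s m) (s k)) < e)
        \<longrightarrow> (\<exists>l\<in>vcarrier H. \<forall>e>0. \<exists>N. \<forall>m\<ge>N. rqhs_norm H (rqhs_diff H (s m) l) < e))"

definition right_quat_hilbert_space :: "'v rqhs \<Rightarrow> bool" where
  "right_quat_hilbert_space H \<longleftrightarrow>
     right_quat_vector_space H \<and> quat_inner_product H \<and> rqhs_complete H"

definition unit_vec :: "'v rqhs \<Rightarrow> 'v \<Rightarrow> bool" where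
  "unit_vec H x \<longleftrightarrow> x \<in> vcarrier H \<and> vinner H x x = qone"

end

theory Submission
  imports Defs
begin


lemma quat_eq_iff: "p = q \<longleftrightarrow> qRe p = qRe q \<and> qI p = qI q \<and> qJ p = qJ q \<and> qK p = qK q"
  by (cases p; cases q) auto

instantiation quat :: real_algebra_1
begin
definition "0 = qzero"
definition "1 = qone"
definition "p + q = qadd p q"
definition "p * q = qmul p q"
definition "- p = Quat (- qRe p) (- qI p) (- qJ p) (- qK p)"
definition "p - q = Quat (qRe p - qRe q) (qI p - qI q) (qJ p - qJ q) (qK p - qK q)"
definition "scaleR r p = Quat (r * qRe p) (r * qI p) (r * qJ p) (r * qK p)"
lemmas qdefs = zero_quat_def one_quat_def plus_quat_def times_quat_def uminus_quat_def minus_quat_def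
  scaleR_quat_def qzero_def qone_def qadd_def qmul_def
instance
  by standard (auto simp: qdefs quat_eq_iff algebra_simps)
end

lemma qsel_simps[simp]:
  "qRe 0 = 0" "qI 0 = 0" "qJ 0 = 0" "qK 0 = 0"
  "qRe 1 = 1" "qI 1 = 0" "qJ 1 = 0" "qK 1 = 0"
  "qRe (p + q) = qRe p + qRe q" "qI (p + q) = qI p + qI q" "qJ (p + q) = qJ p + qJ q" "qK (p + q) = qK p + qK q"
  "qRe (p - q) = qRe p - qRe q" "qI (p - q) = qI p - qI q" "qJ (p - q) = qJ p - qJ q" "qK (p - q) = qK p - qK q"
  "qRe (- p) = - qRe p" "qI (- p) = - qI p" "qJ (- p) = - qJ p" "qK (- p) = - qK p"
  "qRe (scaleR r p) = r * qRe p" "qI (scaleR r p) = r * qI p" "qJ (scaleR r p) = r * qJ p" "qK (scaleR r p) = r * qK p"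
  "qRe (p * q) = qRe p * qRe q - qI p * qI q - qJ p * qJ q - qK p * qK q"
  "qI (p * q) = qRe p * qI q + qI p * qRe q + qJ p * qK q - qK p * qJ q"
  "qJ (p * q) = qRe p * qJ q - qI p * qK q + qJ p * qRe q + qK p * qI q"
  "qK (p * q) = qRe p * qK q + qI p * qJ q - qJ p * qI q + qK p * qRe q"
  by (simp_all add: qdefs)

lemma qof_real_sel[simp]: "qRe (of_real r) = r" "qI (of_real r) = 0" "qJ (of_real r) = 0" "qK (of_real r) = 0"
  by (simp_all add: of_real_def)

lemma qops: "qmul = (*)" "qadd = (+)" "qone = 1" "qzero = 0" "qof_real = of_real"
  by (auto simp: fun_eq_iff quat_eq_iff qof_real_def qdefs)

lemma of_real_quat_commute: "of_real r * (q::quat) = q * of_real r"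
  by (simp add: quat_eq_iff)

lemma qcnj_sel[simp]: "qRe (qcnj q) = qRe q" "qI (qcnj q) = - qI q" "qJ (qcnj q) = - qJ q" "qK (qcnj q) = - qK q"
  by (simp_all add: qcnj_def)

lemma qcnj_add[simp]: "qcnj (p + q) = qcnj p + qcnj q" by (simp add: quat_eq_iff)
lemma qcnj_diff[simp]: "qcnj (p - q) = qcnj p - qcnj q" by (simp add: quat_eq_iff)
lemma qcnj_minus[simp]: "qcnj (- q) = - qcnj q" by (simp add: quat_eq_iff)
lemma qcnj_mult[simp]: "qcnj (p * q) = qcnj q * qcnj p" by (simp add: quat_eq_iff) 
lemma qcnj_cnj[simp]: "qcnj (qcnj q) = q" by (simp add: quat_eq_iff)
lemma qcnj_of_real[simp]: "qcnj (of_real r) = of_real r" by (simp add: quat_eq_iff)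
lemma qcnj_0[simp]: "qcnj 0 = 0" by (simp add: quat_eq_iff)
lemma qcnj_1[simp]: "qcnj 1 = 1" by (simp add: quat_eq_iff)
lemma qcnj_sum: "qcnj (sum f A) = sum (\<lambda>x. qcnj (f x)) A"
  by (induction A rule: infinite_finite_induct) auto
lemma qRe_sum: "qRe (sum f A) = sum (\<lambda>x. qRe (f x)) A"
  by (induction A rule: infinite_finite_induct) auto
lemma qRe_comm: "qRe (p * q) = qRe (q * p)" by simp
lemma qRe_mult_of_real: "qRe (p * of_real r) = qRe p * r" by simp
lemma qRe_cnj_mult_self: "qRe (qcnj p * p) = (qabs p)^2"
  by (simp add: qabs_def power2_eq_square)
lemma cnj_mult_self: "qcnj p * p = of_real ((qabs p)^2)"
  by (simp add: qabs_def quat_eq_iff power2_eq_square algebra_simps)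
lemma mult_cnj_self: "p * qcnj p = of_real ((qabs p)^2)"
  by (simp add: qabs_def quat_eq_iff power2_eq_square algebra_simps)
lemma qabs_nonneg: "qabs p \<ge> 0" by (simp add: qabs_def)
lemma qabs_cnj: "qabs (qcnj p) = qabs p" by (simp add: qabs_def)
lemma qabs_zero_iff: "qabs p = 0 \<longleftrightarrow> p = 0"
  by (simp add: qabs_def quat_eq_iff) (smt (verit) sum_power2_eq_zero_iff zero_le_power2)


definition qform :: "nat \<Rightarrow> (nat \<Rightarrow> nat \<Rightarrow> quat) \<Rightarrow> (nat \<Rightarrow> quat) \<Rightarrow> quat" where
  "qform m K \<xi> = (\<Sum>p<m. \<Sum>q<m. qcnj (\<xi> p) * K p q * \<xi> q)"

definition psd :: "nat \<Rightarrow> (nat \<Rightarrow> nat \<Rightarrow> quat) \<Rightarrow> bool" where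
  "psd m K \<longleftrightarrow> (\<forall>p<m. \<forall>q<m. K q p = qcnj (K p q)) \<and> (\<forall>\<xi>. 0 \<le> qRe (qform m K \<xi>))"

lemma sum_two_points:
  fixes f :: "nat \<Rightarrow> 'a::comm_monoid_add"
  assumes "p < m" "q < m" "p \<noteq> q" "\<And>l. l \<noteq> p \<Longrightarrow> l \<noteq> q \<Longrightarrow> f l = 0"
  shows "(\<Sum>l<m. f l) = f p + f q"
proof -
  have "(\<Sum>l<m. f l) = (\<Sum>l\<in>{p,q}. f l)"
    using assms by (intro sum.mono_neutral_right) auto
  then show ?thesis using assms by simp
qed

lemma sum_one_point:
  fixes f :: "nat \<Rightarrow> 'a::comm_monoid_add"
  assumes "p < m" "\<And>l. l \<noteq> p \<Longrightarrow> f l = 0"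
  shows "(\<Sum>l<m. f l) = f p"
proof -
  have "(\<Sum>l<m. f l) = (\<Sum>l\<in>{p}. f l)"
    using assms by (intro sum.mono_neutral_right) auto
  then show ?thesis using assms by simp
qed

lemma qform_two:
  assumes "p < m" "q < m" "p \<noteq> q"
  shows "qform m K (\<lambda>l. if l = p then a else if l = q then b else 0)
    = qcnj a * K p p * a + qcnj a * K p q * b + qcnj b * K q p * a + qcnj b * K q q * b"
proof -
  let ?x = "\<lambda>l. if l = p then a else if l = q then b else 0"
  have "qform m K ?x = (\<Sum>p'<m. qcnj (?x p') * K p' p * a + qcnj (?x p') * K p' q * b)"
    unfolding qform_def
  proof (rule sum.cong[OF refl])
    fix p' show "(\<Sum>q'<m. qcnj (?x p') * K p' q' * ?x q') = qcnj (?x p') * K p' p * a + qcnj (?x p') * K p' q * b"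
      by (subst sum_two_points[OF assms]) (use assms in auto)
  qed
  also have "\<dots> = qcnj a * K p p * a + qcnj a * K p q * b + (qcnj b * K q p * a + qcnj b * K q q * b)"
    by (subst sum_two_points[OF assms]) (use assms in auto)
  finally show ?thesis by (simp add: add.assoc)
qed

lemma qform_one:
  assumes "p < m"
  shows "qform m K (\<lambda>l. if l = p then a else 0) = qcnj a * K p p * a"
proof -
  let ?x = "\<lambda>l. if l = p then a else 0"
  have "qform m K ?x = (\<Sum>p'<m. qcnj (?x p') * K p' p * a)"
    unfolding qform_def
  proof (rule sum.cong[OF refl])
    fix p' show "(\<Sum>q'<m. qcnj (?x p') * K p' q' * ?x q') = qcnj (?x p') * K p' p * a"
      by (subst sum_one_point[OF assms]) (use assms in auto)
  qed
  also have "\<dots> = qcnj a * K p p * a"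
    by (subst sum_one_point[OF assms]) (use assms in auto)
  finally show ?thesis .
qed

lemma psd_diag_real:
  assumes "psd m K" "p < m"
  shows "K p p = of_real (qRe (K p p))" "qRe (K p p) \<ge> 0"
proof -
  have "K p p = qcnj (K p p)" using assms unfolding psd_def by blast
  then have "qI (K p p) = 0 \<and> qJ (K p p) = 0 \<and> qK (K p p) = 0"
    by (smt (verit) qcnj_sel(2,3,4))
  then show "K p p = of_real (qRe (K p p))" by (simp add: quat_eq_iff)
  have "0 \<le> qRe (qform m K (\<lambda>l. if l = p then 1 else 0))" using assms unfolding psd_def by blast
  then show "qRe (K p p) \<ge> 0" using qform_one[OF assms(2), of K 1] by simp
qed


lemma psd_zero_row:
  assumes "psd m K" "p < m" "q < m" "qRe (K p p) = 0"
  shows "K p q = 0"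
proof (cases "p = q")
  case True
  then show ?thesis using psd_diag_real[OF assms(1,2)] assms(4) by simp
next
  case False
  let ?k = "K p q"
  have Kpp: "K p p = 0" using psd_diag_real[OF assms(1,2)] assms(4) by simp
  have Kqp: "K q p = qcnj ?k" using assms(1-3) unfolding psd_def by blast
  have Kqq: "qRe (K q q) \<ge> 0" using psd_diag_real[OF assms(1,3)] by simp
  have key: "qRe (K q q) - 2 * t * (qabs ?k)^2 \<ge> 0" for t
  proof -
    have "0 \<le> qRe (qform m K (\<lambda>l. if l = p then - (of_real t * ?k) else if l = q then 1 else 0))"
      using assms(1) unfolding psd_def by blast
    also have "\<dots> = qRe (K q q) - 2 * t * (qabs ?k)^2"
      unfolding qform_two[OF assms(2,3) False] Kpp Kqp
      by (simp add: qabs_def power2_eq_square algebra_simps)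
    finally show ?thesis .
  qed
  show ?thesis
  proof (rule ccontr)
    assume "?k \<noteq> 0"
    then have "(qabs ?k)^2 > 0" using qabs_zero_iff qabs_nonneg by (metis less_eq_real_def zero_less_power2)
    moreover have "qRe (K q q) - 2 * ((qRe (K q q) + 1) / (qabs ?k)^2) * (qabs ?k)^2 = - qRe (K q q) - 2"
      using calculation by (simp add: field_simps)
    ultimately show False using key[of "(qRe (K q q) + 1) / (qabs ?k)^2"] Kqq by linarith
  qed
qed

lemma psd_unit_cs:
  assumes "psd m K" "p < m" "q < m" "K p p = 1" "K q q = 1"
  shows "qabs (K p q) \<le> 1"
proof (cases "p = q")
  case True
  then show ?thesis using assms by (simp add: qabs_def)
next
  case False
  let ?k = "K p q"
  have Kqp: "K q p = qcnj ?k" using assms(1-3) unfolding psd_def by blast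
  have "0 \<le> qRe (qform m K (\<lambda>l. if l = p then - ?k else if l = q then 1 else 0))"
    using assms(1) unfolding psd_def by blast
  also have "\<dots> = 1 - (qabs ?k)^2"
    unfolding qform_two[OF assms(2,3) False] Kqp assms(4,5)
    by (simp add: qabs_def power2_eq_square algebra_simps)
  finally have "(qabs ?k)^2 \<le> 1" by simp
  then show ?thesis by (simp add: power_le_one_iff qabs_nonneg abs_square_le_1)
qed


lemma ofr1: "of_real r * (q::quat) = r *\<^sub>R q" by (simp add: scaleR_conv_of_real)
lemma ofr2: "(q::quat) * of_real r = r *\<^sub>R q" by (simp add: quat_eq_iff)
lemma qcnj_scaleR[simp]: "qcnj (r *\<^sub>R q) = r *\<^sub>R qcnj q" by (simp add: quat_eq_iff)
lemmas ofr = ofr1 ofr2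

lemma psd_schur_step:
  assumes "psd (Suc m) K"
  defines "d \<equiv> qRe (K 0 0)"
  defines "S \<equiv> (\<lambda>p q. K (Suc p) (Suc q) - K (Suc p) 0 * of_real (1/d) * K 0 (Suc q))"
  shows "psd m S"
proof -
  have herm: "\<And>p q. p < Suc m \<Longrightarrow> q < Suc m \<Longrightarrow> qcnj (K p q) = K q p"
  proof -
    have H: "\<forall>p<Suc m. \<forall>q<Suc m. K q p = qcnj (K p q)" using assms(1) unfolding psd_def by (rule conjunct1)
    fix p q assume "p < Suc m" "q < Suc m"
    then show "qcnj (K p q) = K q p" using H[rule_format] qcnj_cnj by metis
  qed
  have K00: "K 0 0 = of_real d" using psd_diag_real[OF assms(1)] d_def by simp
  have rrd: "(1/d) * (1/d) * d = 1/d" by (cases "d = 0") (simp_all add: field_simps)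
  show ?thesis unfolding psd_def
  proof (intro conjI allI impI)
    fix p q assume pq: "p < m" "q < m"
    have "qcnj (S p q) = qcnj (K (Suc p) (Suc q)) - qcnj (K 0 (Suc q)) * of_real (1/d) * qcnj (K (Suc p) 0)"
      unfolding S_def by (simp add: mult.assoc ofr)
    also have "\<dots> = S q p" unfolding S_def using pq by (simp add: herm)
    finally show "S q p = qcnj (S p q)" by simp
  next
    fix \<xi> :: "nat \<Rightarrow> quat"
    define b where "b = (\<Sum>q<m. K 0 (Suc q) * \<xi> q)"
    define r where "r = 1/d"
    define \<zeta> where "\<zeta> = (\<lambda>l. if l = 0 then - (of_real r * b) else \<xi> (l - 1))"
    have bc: "(\<Sum>p<m. qcnj (\<xi> p) * K (Suc p) 0) = qcnj b"
      unfolding b_def qcnj_sum by (rule sum.cong) (auto simp: herm)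
    have "qform (Suc m) K \<zeta> = 
       (qcnj (\<zeta> 0) * K 0 0 * \<zeta> 0 + (\<Sum>q<m. qcnj (\<zeta> 0) * K 0 (Suc q) * \<xi> q)) +
       (\<Sum>p<m. qcnj (\<xi> p) * K (Suc p) 0 * \<zeta> 0 + (\<Sum>q<m. qcnj (\<xi> p) * K (Suc p) (Suc q) * \<xi> q))"
      unfolding qform_def sum.lessThan_Suc_shift by (simp add: \<zeta>_def)
    also have "\<dots> = (qcnj (\<zeta> 0) * K 0 0 * \<zeta> 0 + qcnj (\<zeta> 0) * b) +
       (qcnj b * \<zeta> 0 + (\<Sum>p<m. \<Sum>q<m. qcnj (\<xi> p) * K (Suc p) (Suc q) * \<xi> q))"
      unfolding sum.distrib b_def
      by (simp add: sum_distrib_left sum_distrib_right mult.assoc bc[symmetric, unfolded b_def])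
    also have "\<dots> = of_real (r * r * d) * (qcnj b * b) - of_real r * (qcnj b * b) - of_real r * (qcnj b * b)
         + (\<Sum>p<m. \<Sum>q<m. qcnj (\<xi> p) * K (Suc p) (Suc q) * \<xi> q)"
      unfolding K00 \<zeta>_def
      by (simp add: algebra_simps ofr) 
    also have "\<dots> = (\<Sum>p<m. \<Sum>q<m. qcnj (\<xi> p) * K (Suc p) (Suc q) * \<xi> q) - qcnj b * of_real r * b"
      using rrd unfolding r_def by (simp add: algebra_simps ofr)
    also have "\<dots> = qform m S \<xi>"
    proof -
      have "qcnj b * of_real r * b = (\<Sum>p<m. qcnj (\<xi> p) * K (Suc p) 0) * of_real r * (\<Sum>q<m. K 0 (Suc q) * \<xi> q)"
        by (simp only: bc b_def)
      also have "\<dots> = (\<Sum>p<m. \<Sum>q<m. qcnj (\<xi> p) * (K (Suc p) 0 * of_real r * K 0 (Suc q)) * \<xi> q)"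
        by (simp add: sum_distrib_left sum_distrib_right mult.assoc, subst sum.swap, rule refl)
      finally have "qcnj b * of_real r * b = (\<Sum>p<m. \<Sum>q<m. qcnj (\<xi> p) * (K (Suc p) 0 * of_real r * K 0 (Suc q)) * \<xi> q)" .
      then show ?thesis unfolding qform_def S_def r_def
        by (simp add: algebra_simps sum_subtractf)
    qed
    finally have eq: "qform (Suc m) K \<zeta> = qform m S \<xi>" .
    show "0 \<le> qRe (qform m S \<xi>)" using assms(1) eq unfolding psd_def by metis
  qed
qed


lemma psd_herm:
  assumes "psd m K" "p < m" "q < m"
  shows "qcnj (K p q) = K q p"
proof -
  have H: "\<forall>p<m. \<forall>q<m. K q p = qcnj (K p q)" using assms(1) unfolding psd_def by (rule conjunct1)
  show ?thesis using H[rule_format, OF assms(2,3)] qcnj_cnj by metis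
qed

lemma psd_factor:
  "psd m K \<Longrightarrow> \<exists>c. \<forall>p<m. \<forall>q<m. (\<Sum>l<m. qcnj (c p l) * c q l) = K p q"
proof (induction m arbitrary: K)
  case 0
  then show ?case by simp
next
  case (Suc m)
  define d where "d = qRe (K 0 0)"
  define S where "S = (\<lambda>p q. K (Suc p) (Suc q) - K (Suc p) 0 * of_real (1/d) * K 0 (Suc q))"
  have "psd m S" unfolding S_def d_def by (rule psd_schur_step[OF Suc.prems])
  from Suc.IH[OF this] obtain c' where c': "\<And>p q. p < m \<Longrightarrow> q < m \<Longrightarrow> (\<Sum>l<m. qcnj (c' p l) * c' q l) = S p q"
    by blast
  define s where "s = sqrt d"
  have d0: "d \<ge> 0" and K00: "K 0 0 = of_real d" using psd_diag_real[OF Suc.prems, of 0] d_def by auto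
  have ss: "s * s = d" unfolding s_def using d0 by simp
  have is2: "(1/s) * (1/s) = 1/d" unfolding s_def using d0 by (simp add: field_simps)
  have row: "K 0 (Suc q) = of_real s * (of_real (1/s) * K 0 (Suc q))" if "q < m" for q
  proof (cases "d = 0")
    case True
    then have "K 0 (Suc q) = 0" using psd_zero_row[OF Suc.prems, of 0 "Suc q"] that d_def by simp
    then show ?thesis by simp
  next
    case False
    then have "s \<noteq> 0" unfolding s_def using d0 by simp
    then show ?thesis by (simp add: mult.assoc[symmetric] of_real_mult[symmetric])
  qed
  define c where "c = (\<lambda>p l. case p of 0 \<Rightarrow> (if l = 0 then of_real s else 0)
      | Suc p' \<Rightarrow> (if l = 0 then of_real (1/s) * K 0 (Suc p') else c' p' (l - 1)))"
  have "(\<Sum>l<Suc m. qcnj (c p l) * c q l) = K p q" if "p < Suc m" "q < Suc m" for p q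
  proof -
    have split: "(\<Sum>l<Suc m. qcnj (c p l) * c q l) = qcnj (c p 0) * c q 0 + (\<Sum>l<m. qcnj (c p (Suc l)) * c q (Suc l))"
      by (rule sum.lessThan_Suc_shift)
    show ?thesis
    proof (cases p)
      case 0
      show ?thesis
      proof (cases q)
        case 0
        then show ?thesis unfolding split using \<open>p = 0\<close> K00 ss by (simp add: c_def of_real_mult[symmetric])
      next
        case (Suc q')
        then have "q' < m" using that by simp
        from row[OF this] show ?thesis unfolding split using \<open>p = 0\<close> Suc by (simp add: c_def)
      qed
    next
      case (Suc p')
      then have p': "p' < m" using that by simp
      have herm: "qcnj (K 0 (Suc p')) = K (Suc p') 0" using psd_herm[OF Suc.prems, of 0 "Suc p'"] p' by simp
      show ?thesis
      proof (cases q)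
        case 0
        have "qcnj (c p 0) * c q 0 = qcnj (of_real s * (of_real (1/s) * K 0 (Suc p')))"
          using Suc 0 by (simp add: c_def ofr)
        also have "\<dots> = K (Suc p') 0" using row[OF p'] herm by simp
        finally show ?thesis unfolding split using Suc 0 by (simp add: c_def)
      next
        case (Suc q')
        then have q': "q' < m" using that by simp
        have "qcnj (c p 0) * c q 0 = K (Suc p') 0 * of_real (1/d) * K 0 (Suc q')"
          using \<open>p = Suc p'\<close> Suc herm is2
          by (simp add: c_def mult.assoc of_real_mult[symmetric] flip: herm)
             (simp add: mult.assoc[symmetric] of_real_mult[symmetric] ofr)
        moreover have "(\<Sum>l<m. qcnj (c p (Suc l)) * c q (Suc l)) = S p' q'"
          using c'[OF p' q'] \<open>p = Suc p'\<close> Suc by (simp add: c_def)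
        ultimately show ?thesis unfolding split S_def using \<open>p = Suc p'\<close> Suc by simp
      qed
    qed
  qed
  then show ?case by blast
qed


lemma psd_schur_real:
  assumes G: "psd m G" and B: "finite B" and R: "\<And>p q. p < m \<Longrightarrow> q < m \<Longrightarrow> R p q = (\<Sum>\<beta>\<in>B. f \<beta> p * f \<beta> q)"
  shows "psd m (\<lambda>p q. G p q * of_real (R p q))"
  unfolding psd_def
proof (intro conjI allI impI)
  fix p q assume pq: "p < m" "q < m"
  have H: "\<forall>p<m. \<forall>q<m. G q p = qcnj (G p q)" using G unfolding psd_def by (rule conjunct1)
  have "R q p = R p q" using R pq by (simp add: mult.commute)
  then show "G q p * of_real (R q p) = qcnj (G p q * of_real (R p q))"
    using H[rule_format, OF pq] by (simp add: ofr)
next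
  fix \<xi> :: "nat \<Rightarrow> quat"
  have "qform m (\<lambda>p q. G p q * of_real (R p q)) \<xi> =
        (\<Sum>p<m. \<Sum>q<m. \<Sum>\<beta>\<in>B. (f \<beta> p * f \<beta> q) *\<^sub>R (qcnj (\<xi> p) * G p q * \<xi> q))"
    unfolding qform_def
    by (intro sum.cong refl) (simp add: R ofr scaleR_sum_left sum_distrib_left sum_distrib_right del: of_real_sum of_real_mult)
  also have "\<dots> = (\<Sum>\<beta>\<in>B. qform m G (\<lambda>p. f \<beta> p *\<^sub>R \<xi> p))"
    unfolding qform_def
    apply (subst sum.swap) 
    apply (subst sum.swap[of _ B])
    apply (simp add: ofr mult.assoc)
    apply (intro sum.cong refl)
    apply (simp add: mult.commute)
    done
  finally have "qRe (qform m (\<lambda>p q. G p q * of_real (R p q)) \<xi>) = (\<Sum>\<beta>\<in>B. qRe (qform m G (\<lambda>p. f \<beta> p *\<^sub>R \<xi> p)))"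
    by (simp add: qRe_sum)
  also have "\<dots> \<ge> 0" using G unfolding psd_def by (intro sum_nonneg) blast
  finally show "0 \<le> qRe (qform m (\<lambda>p q. G p q * of_real (R p q)) \<xi>)" .
qed

lemma sq_sum_features:
  fixes x y :: "'t \<Rightarrow> 'i \<Rightarrow> real"
  assumes "finite T" "finite I"
  shows "(\<Sum>t\<in>T. \<Sum>s\<in>T. (\<Sum>i\<in>I. x t i * y s i)^2) =
         (\<Sum>ij\<in>I \<times> I. (\<Sum>t\<in>T. x t (fst ij) * x t (snd ij)) * (\<Sum>s\<in>T. y s (fst ij) * y s (snd ij)))"
proof -
  have "(\<Sum>t\<in>T. \<Sum>s\<in>T. (\<Sum>i\<in>I. x t i * y s i)^2) =
        (\<Sum>t\<in>T. \<Sum>s\<in>T. \<Sum>i\<in>I. \<Sum>j\<in>I. (x t i * x t j) * (y s i * y s j))"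
    by (simp add: power2_eq_square sum_product algebra_simps)
  also have "\<dots> = (\<Sum>t\<in>T. \<Sum>i\<in>I. \<Sum>s\<in>T. \<Sum>j\<in>I. (x t i * x t j) * (y s i * y s j))"
    by (intro sum.cong refl, rule sum.swap)
  also have "\<dots> = (\<Sum>t\<in>T. \<Sum>i\<in>I. \<Sum>j\<in>I. \<Sum>s\<in>T. (x t i * x t j) * (y s i * y s j))"
    by (intro sum.cong refl, rule sum.swap)
  also have "\<dots> = (\<Sum>i\<in>I. \<Sum>t\<in>T. \<Sum>j\<in>I. \<Sum>s\<in>T. (x t i * x t j) * (y s i * y s j))"
    by (rule sum.swap)
  also have "\<dots> = (\<Sum>i\<in>I. \<Sum>j\<in>I. \<Sum>t\<in>T. \<Sum>s\<in>T. (x t i * x t j) * (y s i * y s j))"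
    by (intro sum.cong refl, rule sum.swap)
  also have "\<dots> = (\<Sum>i\<in>I. \<Sum>j\<in>I. (\<Sum>t\<in>T. x t i * x t j) * (\<Sum>s\<in>T. y s i * y s j))"
    by (simp add: sum_product)
  also have "\<dots> = (\<Sum>ij\<in>I \<times> I. (\<Sum>t\<in>T. x t (fst ij) * x t (snd ij)) * (\<Sum>s\<in>T. y s (fst ij) * y s (snd ij)))"
    by (simp only: sum.cartesian_product split_def)
  finally show ?thesis .
qed


definition qe :: "nat \<Rightarrow> quat" where
  "qe t = (if t = 0 then Quat 1 0 0 0 else if t = 1 then Quat 0 1 0 0 else if t = 2 then Quat 0 0 1 0 else Quat 0 0 0 1)"

definition qcomp :: "nat \<Rightarrow> quat \<Rightarrow> real" where
  "qcomp a q = (if a = 0 then qRe q else if a = 1 then qI q else if a = 2 then qJ q else qK q)"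

lemma four_sum: "(\<Sum>t<(4::nat). f t) = f 0 + f 1 + f 2 + (f 3 :: 'a::comm_monoid_add)"
  by (simp add: eval_nat_numeral add.assoc)

lemma qRe_comp: "qRe (qcnj a * b) = (\<Sum>\<alpha><4. qcomp \<alpha> a * qcomp \<alpha> b)"
  by (simp add: four_sum qcomp_def)

lemma absL1: "(\<Sum>s<4. (qRe (p * qe s))^2) = (qabs p)^2"
  by (simp add: four_sum qe_def qabs_def)

lemma absL2: "(qabs (qcnj (qe t) * q))^2 = (qabs q)^2"
  by (simp add: qe_def qabs_def power2_eq_square algebra_simps)

lemma abs4: "4 * (qabs q)^2 = (\<Sum>t<4. \<Sum>s<4. (qRe (qcnj (qe t) * q * qe s))^2)"
  by (simp only: absL1 absL2) simp

lemma half: "(a::real) * b = 4 * ((1/2 * a) * (1/2 * b))" by simp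

lemma abs_ip_features:
  "\<exists>(B::((nat\<times>nat)\<times>(nat\<times>nat)) set) F. finite B \<and> (\<forall>c d. (qabs (\<Sum>l<(m::nat). qcnj (c l) * d l))^2 = (\<Sum>\<beta>\<in>B. F \<beta> c * F \<beta> d))"
proof -
  define I where "I = {..<m} \<times> {..<(4::nat)}"
  define X where "X = (\<lambda>(c::nat \<Rightarrow> quat) t (i::nat\<times>nat). qcomp (snd i) (c (fst i) * qe t))"
  define F where "F = (\<lambda>ij c. (1/2) * (\<Sum>t<4. X c t (fst ij) * X c t (snd ij)))"
  have "(qabs (\<Sum>l<m. qcnj (c l) * d l))^2 = (\<Sum>ij\<in>I \<times> I. F ij c * F ij d)" for c d
  proof -
    have re: "qRe (qcnj (qe t) * (\<Sum>l<m. qcnj (c l) * d l) * qe s) = (\<Sum>i\<in>I. X c t i * X d s i)" for t s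
    proof -
      have eq: "qcnj (qe t) * (\<Sum>l<m. qcnj (c l) * d l) * qe s = (\<Sum>l<m. qcnj (c l * qe t) * (d l * qe s))"
        by (simp add: sum_distrib_left sum_distrib_right mult.assoc)
      have "qRe (qcnj (qe t) * (\<Sum>l<m. qcnj (c l) * d l) * qe s) = (\<Sum>l<m. qRe (qcnj (c l * qe t) * (d l * qe s)))"
        by (simp only: eq qRe_sum)
      also have "\<dots> = (\<Sum>l<m. \<Sum>\<alpha><4. qcomp \<alpha> (c l * qe t) * qcomp \<alpha> (d l * qe s))"
        by (simp only: qRe_comp)
      also have "\<dots> = (\<Sum>i\<in>I. X c t i * X d s i)"
        unfolding I_def X_def by (simp add: sum.cartesian_product split_def)
      finally show ?thesis .
    qed
    have "4 * (qabs (\<Sum>l<m. qcnj (c l) * d l))^2 = (\<Sum>t<4. \<Sum>s<4. (\<Sum>i\<in>I. X c t i * X d s i)^2)"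
      unfolding abs4 re ..
    also have "\<dots> = (\<Sum>ij\<in>I \<times> I. (\<Sum>t<4. X c t (fst ij) * X c t (snd ij)) * (\<Sum>s<4. X d s (fst ij) * X d s (snd ij)))"
      by (rule sq_sum_features) (simp_all add: I_def)
    also have "\<dots> = (\<Sum>ij\<in>I \<times> I. 4 * (F ij c * F ij d))"
      unfolding F_def by (rule sum.cong[OF refl]) (rule half)
    also have "\<dots> = 4 * (\<Sum>ij\<in>I \<times> I. F ij c * F ij d)"
      by (rule sum_distrib_left[symmetric])
    finally show ?thesis by simp
  qed
  moreover have "finite (I \<times> I)" by (simp add: I_def)
  ultimately have "finite (I \<times> I) \<and> (\<forall>c d. (qabs (\<Sum>l<m. qcnj (c l) * d l))^2 = (\<Sum>\<beta>\<in>I \<times> I. F \<beta> c * F \<beta> d))"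
    by blast
  then show ?thesis by (rule exI[where x = "I \<times> I", OF exI[where x = F]])
qed


context
  fixes H :: "'v rqhs"
  assumes VS: "right_quat_vector_space H" and IP: "quat_inner_product H"
begin

lemma vs_closed_add: "x \<in> vcarrier H \<Longrightarrow> y \<in> vcarrier H \<Longrightarrow> vadd H x y \<in> vcarrier H"
  using VS unfolding right_quat_vector_space_def by simp
lemma vs_closed_smul: "x \<in> vcarrier H \<Longrightarrow> vsmul H x a \<in> vcarrier H"
  using VS unfolding right_quat_vector_space_def by simp
lemma vs_zero: "vzero H \<in> vcarrier H"
  using VS unfolding right_quat_vector_space_def by simp
lemma vs_add_zero: "x \<in> vcarrier H \<Longrightarrow> vadd H x (vzero H) = x"
  using VS unfolding right_quat_vector_space_def by simp
lemma vs_smul_one: "x \<in> vcarrier H \<Longrightarrow> vsmul H x 1 = x"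
  using VS unfolding right_quat_vector_space_def qops by simp

lemma ip_herm: "x \<in> vcarrier H \<Longrightarrow> y \<in> vcarrier H \<Longrightarrow> vinner H y x = qcnj (vinner H x y)"
  using IP unfolding quat_inner_product_def by blast

lemma ip_lin_left: "x \<in> vcarrier H \<Longrightarrow> y \<in> vcarrier H \<Longrightarrow> z \<in> vcarrier H \<Longrightarrow>
   vinner H (vadd H (vsmul H x a) (vsmul H y b)) z = qcnj a * vinner H x z + qcnj b * vinner H y z"
  using IP unfolding quat_inner_product_def qops by blast

lemma ip_add_left: "x \<in> vcarrier H \<Longrightarrow> y \<in> vcarrier H \<Longrightarrow> z \<in> vcarrier H \<Longrightarrow>
   vinner H (vadd H x y) z = vinner H x z + vinner H y z"
  using ip_lin_left[of x y z 1 1] by (simp add: vs_smul_one)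

lemma ip_zero_left: "z \<in> vcarrier H \<Longrightarrow> vinner H (vzero H) z = 0"
  using ip_add_left[OF vs_zero vs_zero, of z] vs_add_zero[OF vs_zero] by simp

lemma ip_smul_left: "x \<in> vcarrier H \<Longrightarrow> z \<in> vcarrier H \<Longrightarrow> vinner H (vsmul H x a) z = qcnj a * vinner H x z"
proof -
  assume x: "x \<in> vcarrier H" and z: "z \<in> vcarrier H"
  have "vsmul H x a = vadd H (vsmul H x a) (vsmul H (vzero H) 1)"
    using vs_smul_one[OF vs_zero] vs_add_zero[OF vs_closed_smul[OF x]] by simp
  then have "vinner H (vsmul H x a) z = qcnj a * vinner H x z + qcnj 1 * vinner H (vzero H) z"
    using ip_lin_left[OF x vs_zero z] by metis
  then show ?thesis using ip_zero_left[OF z] by simp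
qed

lemma ip_self_nonneg: "x \<in> vcarrier H \<Longrightarrow> qRe (vinner H x x) \<ge> 0"
proof (cases "x = vzero H")
  case True
  then show ?thesis using ip_zero_left[OF vs_zero] by simp
next
  case False
  assume "x \<in> vcarrier H"
  then have "qpos (vinner H x x)" using False IP unfolding quat_inner_product_def by blast
  then show ?thesis unfolding qpos_def by simp
qed

fun vsum :: "(nat \<Rightarrow> 'v) \<Rightarrow> (nat \<Rightarrow> quat) \<Rightarrow> nat \<Rightarrow> 'v" where
  "vsum w \<xi> 0 = vzero H"
| "vsum w \<xi> (Suc k) = vadd H (vsum w \<xi> k) (vsmul H (w k) (\<xi> k))"

lemma vsum_closed: "(\<And>p. p < k \<Longrightarrow> w p \<in> vcarrier H) \<Longrightarrow> vsum w \<xi> k \<in> vcarrier H"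
  by (induction k) (auto intro: vs_zero vs_closed_add vs_closed_smul)

lemma vsum_ip_left: "(\<And>p. p < k \<Longrightarrow> w p \<in> vcarrier H) \<Longrightarrow> z \<in> vcarrier H \<Longrightarrow>
   vinner H (vsum w \<xi> k) z = (\<Sum>p<k. qcnj (\<xi> p) * vinner H (w p) z)"
proof (induction k)
  case 0
  then show ?case by (simp add: ip_zero_left)
next
  case (Suc k)
  have c: "vsum w \<xi> k \<in> vcarrier H" using Suc.prems by (intro vsum_closed) auto
  have wk: "w k \<in> vcarrier H" using Suc.prems by auto
  show ?case using Suc c wk
    by (simp add: ip_add_left vs_closed_smul ip_smul_left)
qed

lemma vsum_ip_right: "(\<And>p. p < k \<Longrightarrow> w p \<in> vcarrier H) \<Longrightarrow> z \<in> vcarrier H \<Longrightarrow>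
   vinner H z (vsum w \<xi> k) = (\<Sum>p<k. vinner H z (w p) * \<xi> p)"
proof -
  assume w: "\<And>p. p < k \<Longrightarrow> w p \<in> vcarrier H" and z: "z \<in> vcarrier H"
  have "vinner H z (vsum w \<xi> k) = qcnj (vinner H (vsum w \<xi> k) z)"
    using ip_herm[OF vsum_closed[OF w] z] .
  also have "\<dots> = (\<Sum>p<k. qcnj (vinner H (w p) z) * \<xi> p)"
    using vsum_ip_left[OF w z] by (simp add: qcnj_sum)
  also have "\<dots> = (\<Sum>p<k. vinner H z (w p) * \<xi> p)"
    using ip_herm[OF w z] by (intro sum.cong refl) (metis lessThan_iff)
  finally show ?thesis .
qed

lemma gram_psd:
  assumes "\<And>p. p < m \<Longrightarrow> w p \<in> vcarrier H"
  shows "psd m (\<lambda>p q. vinner H (w p) (w q))"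
  unfolding psd_def
proof (intro conjI allI impI)
  fix p q assume "p < m" "q < m"
  then show "vinner H (w q) (w p) = qcnj (vinner H (w p) (w q))" using ip_herm assms by blast
next
  fix \<xi>
  have c: "vsum w \<xi> m \<in> vcarrier H" using assms by (rule vsum_closed)
  have "vinner H (vsum w \<xi> m) (vsum w \<xi> m) = (\<Sum>p<m. qcnj (\<xi> p) * vinner H (w p) (vsum w \<xi> m))"
    by (rule vsum_ip_left[OF assms c])
  also have "\<dots> = (\<Sum>p<m. qcnj (\<xi> p) * (\<Sum>q<m. vinner H (w p) (w q) * \<xi> q))"
    by (intro sum.cong refl) (simp add: vsum_ip_right[OF assms] assms)
  also have "\<dots> = qform m (\<lambda>p q. vinner H (w p) (w q)) \<xi>"
    unfolding qform_def by (simp add: sum_distrib_left mult.assoc)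
  finally show "0 \<le> qRe (qform m (\<lambda>p q. vinner H (w p) (w q)) \<xi>)"
    using ip_self_nonneg[OF c] by simp
qed

end


definition Hs :: "nat \<Rightarrow> (nat \<Rightarrow> quat) rqhs" where
  "Hs m = \<lparr>vcarrier = {f. \<forall>l\<ge>m. f l = 0}, vadd = (\<lambda>f g l. f l + g l), vzero = (\<lambda>l. 0),
           vsmul = (\<lambda>f a l. f l * a), vinner = (\<lambda>f g. \<Sum>l<m. qcnj (f l) * g l)\<rparr>"

lemma Hs_simps[simp]: "vcarrier (Hs m) = {f. \<forall>l\<ge>m. f l = 0}" "vadd (Hs m) = (\<lambda>f g l. f l + g l)"
  "vzero (Hs m) = (\<lambda>l. 0)" "vsmul (Hs m) = (\<lambda>f a l. f l * a)" "vinner (Hs m) = (\<lambda>f g. \<Sum>l<m. qcnj (f l) * g l)"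
  by (simp_all add: Hs_def)

lemma Hs_vs: "right_quat_vector_space (Hs m)"
  unfolding right_quat_vector_space_def qops
  apply (intro conjI ballI allI)
  apply (simp_all add: fun_eq_iff algebra_simps mult.assoc)
  apply (rule_tac x="\<lambda>l. - x l" in exI)
  apply simp
  done

lemma Hs_ip: "quat_inner_product (Hs m)"
  unfolding quat_inner_product_def qops
proof (intro conjI ballI allI impI)
  fix x y :: "nat \<Rightarrow> quat"
  show "vinner (Hs m) y x = qcnj (vinner (Hs m) x y)" by (simp add: qcnj_sum)
next
  fix x y z :: "nat \<Rightarrow> quat" and a b
  show "vinner (Hs m) (vadd (Hs m) (vsmul (Hs m) x a) (vsmul (Hs m) y b)) z =
        qcnj a * vinner (Hs m) x z + qcnj b * vinner (Hs m) y z"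
    by (simp add: sum_distrib_left algebra_simps sum.distrib mult.assoc)
next
  fix x y z :: "nat \<Rightarrow> quat" and a b
  show "vinner (Hs m) z (vadd (Hs m) (vsmul (Hs m) x a) (vsmul (Hs m) y b)) =
        vinner (Hs m) z x * a + vinner (Hs m) z y * b"
    by (simp add: sum_distrib_right algebra_simps sum.distrib mult.assoc)
next
  fix x assume x: "x \<in> vcarrier (Hs m)" and nz: "x \<noteq> vzero (Hs m)"
  from nz obtain l where "x l \<noteq> 0" by (auto simp: fun_eq_iff)
  with x have l: "l < m" "x l \<noteq> 0" by (auto simp: not_le[symmetric])
  have eq: "vinner (Hs m) x x = of_real (\<Sum>l<m. (qabs (x l))^2)"
    by (simp add: cnj_mult_self)
  have "(qabs (x l))^2 > 0" using l qabs_zero_iff qabs_nonneg by (metis less_eq_real_def zero_less_power2)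
  moreover have "(qabs (x l))^2 \<le> (\<Sum>l<m. (qabs (x l))^2)"
    using l by (intro member_le_sum) auto
  ultimately have "(\<Sum>l<m. (qabs (x l))^2) > 0" by linarith
  then show "qpos (vinner (Hs m) x x)" unfolding eq qpos_def qof_real_sel by simp
qed

lemma Hs_norm: "rqhs_norm (Hs m) (rqhs_diff (Hs m) a b) = sqrt (\<Sum>l<m. (qabs (a l - b l))^2)"
proof -
  have "rqhs_diff (Hs m) a b = (\<lambda>l. a l - b l)"
    by (simp add: rqhs_diff_def qops fun_eq_iff quat_eq_iff)
  then show ?thesis unfolding rqhs_norm_def by (simp only: Hs_simps qRe_sum qRe_cnj_mult_self)
qed


lemma qabs_sq: "(qabs q)^2 = (qRe q)^2 + (qI q)^2 + (qJ q)^2 + (qK q)^2"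
  unfolding qabs_def by (simp add: add_nonneg_nonneg)

lemma abs_le_sqrt_aux: "(x::real)^2 \<le> y \<Longrightarrow> \<bar>x\<bar> \<le> sqrt y"
  by (metis power2_abs real_le_rsqrt)

lemma sel_le_qabs: "\<bar>qRe q\<bar> \<le> qabs q" "\<bar>qI q\<bar> \<le> qabs q" "\<bar>qJ q\<bar> \<le> qabs q" "\<bar>qK q\<bar> \<le> qabs q"
  unfolding qabs_def
  by (rule abs_le_sqrt_aux, use zero_le_power2[of "qRe q"] zero_le_power2[of "qI q"] zero_le_power2[of "qJ q"] zero_le_power2[of "qK q"] in linarith)+

lemma qabs_le_sumsq: "l < (m::nat) \<Longrightarrow> qabs (z l) \<le> sqrt (\<Sum>l<m. (qabs (z l))^2)"
proof (rule real_le_rsqrt)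
  assume "l < m"
  show "(qabs (z l))^2 \<le> (\<Sum>l<m. (qabs (z l))^2)"
    by (rule member_le_sum) (use \<open>l < m\<close> in simp_all)
qed

lemma sel_cauchy:
  fixes f :: "quat \<Rightarrow> real" and s :: "nat \<Rightarrow> nat \<Rightarrow> quat"
  assumes lin: "\<And>x y. f (x - y) = f x - f y" and bd: "\<And>x. \<bar>f x\<bar> \<le> qabs x"
    and l: "l < m"
    and C: "\<forall>e>0. \<exists>N. \<forall>a\<ge>N. \<forall>b\<ge>N. sqrt (\<Sum>l<m. (qabs (s a l - s b l))^2) < e"
  shows "(\<lambda>k. f (s k l)) \<longlonglongrightarrow> lim (\<lambda>k. f (s k l))"
proof -
  have "Cauchy (\<lambda>k. f (s k l))"
    unfolding Cauchy_def
  proof (intro allI impI)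
    fix e :: real assume "e > 0"
    then obtain N where N: "\<forall>a\<ge>N. \<forall>b\<ge>N. sqrt (\<Sum>l<m. (qabs (s a l - s b l))^2) < e" using C by blast
    show "\<exists>M. \<forall>a\<ge>M. \<forall>b\<ge>M. dist (f (s a l)) (f (s b l)) < e"
    proof (intro exI allI impI)
      fix a b assume "a \<ge> N" "b \<ge> N"
      have "dist (f (s a l)) (f (s b l)) = \<bar>f (s a l - s b l)\<bar>" by (simp add: lin dist_real_def)
      also have "\<dots> \<le> qabs (s a l - s b l)" by (rule bd)
      also have "\<dots> \<le> sqrt (\<Sum>l<m. (qabs (s a l - s b l))^2)"
        using qabs_le_sumsq[OF l, of "\<lambda>l. s a l - s b l"] by simp
      also have "\<dots> < e" using N \<open>a \<ge> N\<close> \<open>b \<ge> N\<close> by blast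
      finally show "dist (f (s a l)) (f (s b l)) < e" .
    qed
  qed
  then show ?thesis by (simp add: Cauchy_convergent_iff convergent_LIMSEQ_iff)
qed

lemma Hs_complete: "rqhs_complete (Hs m)"
  unfolding rqhs_complete_def
proof (intro allI impI, elim conjE)
  fix s :: "nat \<Rightarrow> nat \<Rightarrow> quat"
  assume sc: "\<forall>k. s k \<in> vcarrier (Hs m)"
  assume C0: "\<forall>e>0. \<exists>N. \<forall>a\<ge>N. \<forall>b\<ge>N. rqhs_norm (Hs m) (rqhs_diff (Hs m) (s a) (s b)) < e"
  then have C: "\<forall>e>0. \<exists>N. \<forall>a\<ge>N. \<forall>b\<ge>N. sqrt (\<Sum>l<m. (qabs (s a l - s b l))^2) < e"
    by (simp add: Hs_norm)
  define L where "L = (\<lambda>l. if l < m then Quat (lim (\<lambda>k. qRe (s k l))) (lim (\<lambda>k. qI (s k l)))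
                                        (lim (\<lambda>k. qJ (s k l))) (lim (\<lambda>k. qK (s k l))) else 0)"
  have Lc: "L \<in> vcarrier (Hs m)" by (simp add: L_def)
  have t: "(\<lambda>k. (qabs (s k l - L l))^2) \<longlonglongrightarrow> 0" if l: "l < m" for l
  proof -
    have r: "(\<lambda>k. qRe (s k l)) \<longlonglongrightarrow> lim (\<lambda>k. qRe (s k l))"
      by (rule sel_cauchy[OF _ _ l C]) (simp_all add: sel_le_qabs)
    have i: "(\<lambda>k. qI (s k l)) \<longlonglongrightarrow> lim (\<lambda>k. qI (s k l))"
      by (rule sel_cauchy[OF _ _ l C]) (simp_all add: sel_le_qabs)
    have j: "(\<lambda>k. qJ (s k l)) \<longlonglongrightarrow> lim (\<lambda>k. qJ (s k l))"
      by (rule sel_cauchy[OF _ _ l C]) (simp_all add: sel_le_qabs)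
    have k: "(\<lambda>k. qK (s k l)) \<longlonglongrightarrow> lim (\<lambda>k. qK (s k l))"
      by (rule sel_cauchy[OF _ _ l C]) (simp_all add: sel_le_qabs)
    have "(\<lambda>k. (qRe (s k l) - lim (\<lambda>k. qRe (s k l)))^2 + (qI (s k l) - lim (\<lambda>k. qI (s k l)))^2
             + (qJ (s k l) - lim (\<lambda>k. qJ (s k l)))^2 + (qK (s k l) - lim (\<lambda>k. qK (s k l)))^2)
          \<longlonglongrightarrow> 0^2 + 0^2 + 0^2 + 0^2"
      by (intro tendsto_add tendsto_power LIM_zero r i j k)
    then show ?thesis using l by (simp add: qabs_sq L_def)
  qed
  have "(\<lambda>k. sqrt (\<Sum>l<m. (qabs (s k l - L l))^2)) \<longlonglongrightarrow> sqrt (\<Sum>l<m. 0)"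
    by (intro tendsto_intros t) simp
  then have lim0: "(\<lambda>k. sqrt (\<Sum>l<m. (qabs (s k l - L l))^2)) \<longlonglongrightarrow> 0" by simp
  show "\<exists>l\<in>vcarrier (Hs m). \<forall>e>0. \<exists>N. \<forall>k\<ge>N. rqhs_norm (Hs m) (rqhs_diff (Hs m) (s k) l) < e"
  proof (intro bexI[OF _ Lc] allI impI)
    fix e :: real assume "e > 0"
    then obtain N where "\<forall>k\<ge>N. norm (sqrt (\<Sum>l<m. (qabs (s k l - L l))^2) - 0) < e"
      using lim0 unfolding LIMSEQ_iff by blast
    then have "\<forall>k\<ge>N. sqrt (\<Sum>l<m. (qabs (s k l - L l))^2) < e"
      by (auto intro: le_less_trans[OF abs_ge_self])
    then show "\<exists>N. \<forall>k\<ge>N. rqhs_norm (Hs m) (rqhs_diff (Hs m) (s k) L) < e"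
      by (auto simp: Hs_norm)
  qed
qed

lemma Hs_hilbert: "right_quat_hilbert_space (Hs m)"
  unfolding right_quat_hilbert_space_def using Hs_vs Hs_ip Hs_complete by blast


lemma psd_cong:
  assumes "psd m K" "\<And>p q. p < m \<Longrightarrow> q < m \<Longrightarrow> K' p q = K p q"
  shows "psd m K'"
proof -
  have H: "\<forall>p<m. \<forall>q<m. K q p = qcnj (K p q)" using assms(1) unfolding psd_def by (rule conjunct1)
  have "qform m K' \<xi> = qform m K \<xi>" for \<xi>
    unfolding qform_def by (intro sum.cong refl) (simp add: assms(2))
  moreover have "K' q p = qcnj (K' p q)" if "p < m" "q < m" for p q
    using H[rule_format, OF that] assms(2)[OF that] assms(2)[OF that(2,1)] by simp
  ultimately show ?thesis using assms(1) unfolding psd_def by metis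
qed

lemma psd_powers:
  assumes K: "psd m K" and B: "finite B"
    and R: "\<And>p q. p < m \<Longrightarrow> q < m \<Longrightarrow> R p q = (\<Sum>\<beta>\<in>B. f \<beta> p * f \<beta> q)"
  shows "psd m (\<lambda>p q. K p q * of_real (R p q ^ k))"
proof (induction k)
  case 0
  then show ?case using K by simp
next
  case (Suc k)
  have "psd m (\<lambda>p q. (K p q * of_real (R p q ^ k)) * of_real (R p q))"
    by (rule psd_schur_real[OF Suc B R])
  moreover have "(\<lambda>p q. K p q * of_real (R p q ^ Suc k)) = (\<lambda>p q. (K p q * of_real (R p q ^ k)) * of_real (R p q))"
    by (simp add: fun_eq_iff mult.assoc power_Suc2 of_real_mult del: power_Suc)
  ultimately show ?case by simp
qed

lemma sgn_sq_abs: "\<bar>r\<bar> * sgn r * sgn r = \<bar>r::real\<bar>" "\<bar>r\<bar> * sgn r = r"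
  by (cases "r > 0"; cases "r = 0"; simp)+


lemma qRe_scal: "qRe (x * (y * of_real r) * z) = r * qRe (x * y * z)"
  by (simp add: ofr)

lemma qabs_one: "qabs 1 = 1" by (simp add: qabs_def)

lemma main_matrix:
  fixes K :: "nat \<Rightarrow> nat \<Rightarrow> quat" and a :: "nat \<Rightarrow> real" and n m :: nat
  assumes psdK: "psd m K" and diag: "\<And>p. p < m \<Longrightarrow> K p p = 1"
    and fac: "\<And>p q. p < m \<Longrightarrow> q < m \<Longrightarrow> (\<Sum>l<m. qcnj (c p l) * c q l) = K p q"
    and sa: "summable (\<lambda>i. \<bar>a i\<bar>)" and sa1: "(\<Sum>i. \<bar>a i\<bar>) = 1"
  defines "\<sigma> \<equiv> \<lambda>k p. if p < n then 1 else sgn (a k)"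
  defines "S \<equiv> \<lambda>p q. (\<Sum>k. \<bar>a k\<bar> * \<sigma> k p * \<sigma> k q * ((qabs (K p q))^2) ^ k)"
  shows "psd m (\<lambda>p q. K p q * of_real (S p q))"
    and "\<And>p. p < m \<Longrightarrow> K p p * of_real (S p p) = 1"
    and "\<And>p q. p < n \<Longrightarrow> n \<le> q \<Longrightarrow> K p q * of_real (S p q) = K p q * of_real (\<Sum>k. a k * qabs (K p q) ^ (2*k))"
proof -
  define R where "R = (\<lambda>p q. (qabs (K p q))^2)"
  define t where "t = (\<lambda>k p q. \<bar>a k\<bar> * \<sigma> k p * \<sigma> k q * R p q ^ k)"
  have S_t: "S p q = (\<Sum>k. t k p q)" for p q unfolding S_def t_def R_def by simp
  obtain B :: "((nat\<times>nat)\<times>(nat\<times>nat)) set" and F where B: "finite B"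
    and F: "\<And>c d. (qabs (\<Sum>l<m. qcnj (c l) * d l))^2 = (\<Sum>\<beta>\<in>B. F \<beta> c * F \<beta> d)"
    using abs_ip_features[of m] by blast
  have Rf: "R p q = (\<Sum>\<beta>\<in>B. F \<beta> (c p) * F \<beta> (c q))" if "p < m" "q < m" for p q
    unfolding R_def fac[OF that, symmetric] by (rule F)
  have G: "psd m (\<lambda>p q. K p q * of_real (R p q ^ k))" for k
    by (rule psd_powers[OF psdK B, of R "\<lambda>\<beta> p. F \<beta> (c p)"]) (simp add: Rf)
  have T: "psd m (\<lambda>p q. K p q * of_real (t k p q))" for k
  proof -
    define g where "g = (\<lambda>p. sqrt \<bar>a k\<bar> * \<sigma> k p)"
    have "psd m (\<lambda>p q. (K p q * of_real (R p q ^ k)) * of_real (g p * g q))"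
      by (rule psd_schur_real[OF G, of "{()}" _ "\<lambda>_ p. g p"]) simp_all
    moreover have "(K p q * of_real (R p q ^ k)) * of_real (g p * g q) = K p q * of_real (t k p q)" for p q
    proof -
      have sq: "sqrt \<bar>a k\<bar> * sqrt \<bar>a k\<bar> = \<bar>a k\<bar>" by simp
      have "R p q ^ k * (g p * g q) = (sqrt \<bar>a k\<bar> * sqrt \<bar>a k\<bar>) * \<sigma> k p * \<sigma> k q * R p q ^ k"
        unfolding g_def by (simp only: mult_ac)
      also have "\<dots> = t k p q" unfolding sq t_def ..
      finally have e: "R p q ^ k * (g p * g q) = t k p q" .
      have "(K p q * of_real (R p q ^ k)) * of_real (g p * g q) = K p q * of_real (R p q ^ k * (g p * g q))"
        by (simp only: mult.assoc of_real_mult)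
      then show ?thesis unfolding e .
    qed
    ultimately show ?thesis by simp
  qed
  have Rb: "0 \<le> R p q" "R p q \<le> 1" if "p < m" "q < m" for p q
  proof -
    have "qabs (K p q) \<le> 1" using psd_unit_cs[OF psdK that diag diag] that by simp
    then show "0 \<le> R p q" "R p q \<le> 1" unfolding R_def using qabs_nonneg[of "K p q"]
      by (simp_all add: power_le_one)
  qed
  have \<sigma>b: "\<bar>\<sigma> k p\<bar> \<le> 1" for k p unfolding \<sigma>_def by (simp add: abs_sgn_eq)
  have tb: "\<bar>t k p q\<bar> \<le> \<bar>a k\<bar>" if "p < m" "q < m" for k p q
  proof -
    have "\<bar>t k p q\<bar> = \<bar>a k\<bar> * (\<bar>\<sigma> k p\<bar> * \<bar>\<sigma> k q\<bar> * \<bar>R p q\<bar> ^ k)"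
      unfolding t_def by (simp add: abs_mult power_abs)
    also have "\<dots> \<le> \<bar>a k\<bar> * 1"
      using Rb[OF that] \<sigma>b[of k p] \<sigma>b[of k q]
      by (intro mult_left_mono) (auto intro!: mult_le_one power_le_one)
    finally show ?thesis by simp
  qed
  have ts: "summable (\<lambda>k. t k p q)" if "p < m" "q < m" for p q
    by (rule summable_comparison_test'[OF sa]) (use tb[OF that] in simp)
  show "psd m (\<lambda>p q. K p q * of_real (S p q))"
    unfolding psd_def
  proof (intro conjI allI impI)
    fix p q assume pq: "p < m" "q < m"
    have "R q p = R p q" unfolding R_def using psd_herm[OF psdK pq] qabs_cnj by metis
    then have "S q p = S p q" unfolding S_t t_def by (simp add: algebra_simps)
    then show "K q p * of_real (S q p) = qcnj (K p q * of_real (S p q))"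
      using psd_herm[OF psdK pq] by (simp add: ofr)
  next
    fix \<xi> :: "nat \<Rightarrow> quat"
    define A where "A = (\<lambda>p q. qRe (qcnj (\<xi> p) * K p q * \<xi> q))"
    have "qRe (qform m (\<lambda>p q. K p q * of_real (S p q)) \<xi>) = (\<Sum>p<m. \<Sum>q<m. S p q * A p q)"
      unfolding qform_def A_def by (simp only: qRe_sum qRe_scal)
    also have "\<dots> = (\<Sum>p<m. \<Sum>q<m. \<Sum>k. t k p q * A p q)"
      by (intro sum.cong refl) (simp add: S_t suminf_mult2 ts)
    also have "\<dots> = (\<Sum>p<m. \<Sum>k. \<Sum>q<m. t k p q * A p q)"
      by (intro sum.cong refl suminf_sum[symmetric] summable_mult2 ts) auto
    also have "\<dots> = (\<Sum>k. \<Sum>p<m. \<Sum>q<m. t k p q * A p q)"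
      by (intro suminf_sum[symmetric] summable_sum summable_mult2 ts) auto
    also have "\<dots> \<ge> 0"
    proof (rule suminf_nonneg)
      show "summable (\<lambda>k. \<Sum>p<m. \<Sum>q<m. t k p q * A p q)"
        by (intro summable_sum summable_mult2 ts) auto
      fix k
      have "(\<Sum>p<m. \<Sum>q<m. t k p q * A p q) = qRe (qform m (\<lambda>p q. K p q * of_real (t k p q)) \<xi>)"
        unfolding qform_def A_def by (simp only: qRe_sum qRe_scal)
      also have "\<dots> \<ge> 0" using T[of k] unfolding psd_def by blast
      finally show "0 \<le> (\<Sum>p<m. \<Sum>q<m. t k p q * A p q)" .
    qed
    finally show "0 \<le> qRe (qform m (\<lambda>p q. K p q * of_real (S p q)) \<xi>)" .
  qed
  show "K p p * of_real (S p p) = 1" if "p < m" for p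
  proof -
    have "R p p = 1" unfolding R_def using diag[OF that] by (simp add: qabs_one)
    then have "t k p p = \<bar>a k\<bar>" for k unfolding t_def \<sigma>_def by (simp add: sgn_sq_abs)
    then have "S p p = 1" unfolding S_t using sa1 by simp
    then show ?thesis using diag[OF that] by simp
  qed
  show "K p q * of_real (S p q) = K p q * of_real (\<Sum>k. a k * qabs (K p q) ^ (2*k))" if "p < n" "n \<le> q" for p q
  proof -
    have "S p q = (\<Sum>k. a k * qabs (K p q) ^ (2*k))"
      unfolding S_def \<sigma>_def using that by (simp add: sgn_sq_abs power_mult)
    then show ?thesis by simp
  qed
qed


theorem mainTheorem16:
  fixes H :: "'v rqhs" and x y :: "nat \<Rightarrow> 'v" and n :: nat and a :: "nat \<Rightarrow> real"
  assumes "right_quat_hilbert_space H"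
    and "\<forall>i\<in>{1..n}. unit_vec H (x i) \<and> unit_vec H (y i)"
    and "summable (\<lambda>i. \<bar>a i\<bar>)" and "(\<Sum>i. \<bar>a i\<bar>) = 1"
  shows "\<exists>(H' :: (nat \<Rightarrow> quat) rqhs) u v.
           right_quat_hilbert_space H' \<and>
           (\<forall>i\<in>{1..n}. unit_vec H' (u i) \<and> unit_vec H' (v i)) \<and>
           (\<forall>i\<in>{1..n}. \<forall>j\<in>{1..n}.
              qmul (vinner H (x i) (y j))
                   (qof_real (\<Sum>k. a k * (qabs (vinner H (x i) (y j))) ^ (2 * k)))
              = vinner H' (u i) (v j))"
proof -
  have VS: "right_quat_vector_space H" and IP: "quat_inner_product H"
    using assms(1) unfolding right_quat_hilbert_space_def by auto
  define m where "m = n + n"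
  define w where "w = (\<lambda>p. if p < n then x (Suc p) else y (Suc (p - n)))"
  have wu: "unit_vec H (w p)" if "p < m" for p
  proof (cases "p < n")
    case True
    then show ?thesis using assms(2) unfolding w_def by (simp add: Suc_le_eq)
  next
    case False
    then have "Suc (p - n) \<in> {1..n}" using that unfolding m_def by auto
    then show ?thesis using assms(2) False unfolding w_def by simp
  qed
  have wc: "w p \<in> vcarrier H" and w1: "vinner H (w p) (w p) = 1" if "p < m" for p
    using wu[OF that] unfolding unit_vec_def qops by auto
  define K where "K = (\<lambda>p q. vinner H (w p) (w q))"
  have psdK: "psd m K" unfolding K_def by (rule gram_psd[OF VS IP wc])
  obtain c where c: "\<And>p q. p < m \<Longrightarrow> q < m \<Longrightarrow> (\<Sum>l<m. qcnj (c p l) * c q l) = K p q"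
    using psd_factor[OF psdK] by blast
  have diag: "K p p = 1" if "p < m" for p unfolding K_def using w1[OF that] .
  define \<sigma> where "\<sigma> = (\<lambda>k p. if p < n then 1 else sgn (a k))"
  define S where "S = (\<lambda>p q. (\<Sum>k. \<bar>a k\<bar> * \<sigma> k p * \<sigma> k q * ((qabs (K p q))^2) ^ k))"
  define K' where "K' = (\<lambda>p q. K p q * of_real (S p q))"
  have MM1: "psd m K'" unfolding K'_def S_def \<sigma>_def
    by (rule main_matrix(1)[where n = n and c = c]) (simp_all add: psdK diag c assms(3,4))
  have MM2: "K' p p = 1" if "p < m" for p unfolding K'_def S_def \<sigma>_def
    by (rule main_matrix(2)[where n = n and c = c and m = m]) (simp_all add: psdK diag c assms(3,4) that)
  have MM3: "K' p q = K p q * of_real (\<Sum>k. a k * qabs (K p q) ^ (2*k))" if "p < n" "n \<le> q" for p q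
    unfolding K'_def S_def \<sigma>_def
    by (rule main_matrix(3)[where n = n and c = c and m = m]) (simp_all add: psdK diag c assms(3,4) that)
  obtain u where u: "\<And>p q. p < m \<Longrightarrow> q < m \<Longrightarrow> (\<Sum>l<m. qcnj (u p l) * u q l) = K' p q"
    using psd_factor[OF MM1] by blast
  define u' where "u' = (\<lambda>p l. if l < m then u p l else 0)"
  have u'c: "u' p \<in> vcarrier (Hs m)" for p by (simp add: u'_def)
  have u'ip: "vinner (Hs m) (u' p) (u' q) = K' p q" if "p < m" "q < m" for p q
    using u[OF that] by (simp add: u'_def)
  have A: "right_quat_hilbert_space (Hs m)" by (rule Hs_hilbert)
  have B: "unit_vec (Hs m) (u' (i - 1)) \<and> unit_vec (Hs m) (u' (n + (i - 1)))" if i: "i \<in> {1..n}" for i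
  proof -
    have p: "i - 1 < m" "n + (i - 1) < m" using i unfolding m_def by auto
    have "K' (i - 1) (i - 1) = 1" "K' (n + (i - 1)) (n + (i - 1)) = 1"
      using MM2 p by auto
    then show ?thesis unfolding unit_vec_def qops using u'c u'ip[OF p(1) p(1)] u'ip[OF p(2) p(2)] by simp
  qed
  have C: "qmul (vinner H (x i) (y j)) (qof_real (\<Sum>k. a k * (qabs (vinner H (x i) (y j))) ^ (2 * k)))
              = vinner (Hs m) (u' (i - 1)) (u' (n + (j - 1)))" if i: "i \<in> {1..n}" and j: "j \<in> {1..n}" for i j
  proof -
    have p: "i - 1 < m" "i - 1 < n" and q: "n + (j - 1) < m" "n \<le> n + (j - 1)" using i j unfolding m_def by auto
    have wx: "w (i - 1) = x i" using i unfolding w_def by auto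
    have wy: "w (n + (j - 1)) = y j" using j unfolding w_def by auto
    have "vinner (Hs m) (u' (i - 1)) (u' (n + (j - 1))) = K' (i - 1) (n + (j - 1))"
      by (rule u'ip[OF p(1) q(1)])
    also have "\<dots> = K (i - 1) (n + (j - 1)) * of_real (\<Sum>k. a k * qabs (K (i - 1) (n + (j - 1))) ^ (2*k))"
      by (rule MM3[OF p(2) q(2)])
    also have "\<dots> = vinner H (x i) (y j) * of_real (\<Sum>k. a k * qabs (vinner H (x i) (y j)) ^ (2*k))"
      unfolding K_def wx wy ..
    finally show ?thesis unfolding qops by simp
  qed
  show ?thesis
    apply (rule exI[of _ "Hs m"], rule exI[of _ "\<lambda>i. u' (i - 1)"], rule exI[of _ "\<lambda>j. u' (n + (j - 1))"])
    using A B C by simp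
qed


end
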